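(* Let $(A,C,k)$ be an instance and $W$ an affordable committee. Then every CC-completion of $W$ has representation ratio at least $\frac34$.
   Context: An instance $(A,C,k)$ consists of a finite nonempty candidate set $C$, voters $N=\{1,\dots,n\}$, approval sets $A_i\subseteq C$, and a committee size $1\le k\le|C|$. A committee is $W\subseteq C$ with $|W|\le k$. $\mathrm{cov}(W)=|\{i: A_i\cap W\ne\emptyset\}|$; the representation ratio is $\mathrm{cov}(W)/\max\{\mathrm{cov}(W'):|W'|=k\}$. A CC-completion of $W$ is $W\cup T$ with $T\subseteq C\setminus W$, $|T|=k-|W|$, maximizing $\mathrm{cov}(W\cup T)$. $W$ is affordable if there are $p_i:C\to\mathbb{R}_{\ge0}$ ($i\in N$) with $p_i(c)=0$ for $c\notin A_i$, $\sum_c p_i(c)\le k/n$, $\sum_i p_i(c)=1$ for $c\in W$, $\sum_i p_i(c)=0$ for $c\notin W$. *)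

theory Defs
  imports Complex_Main
begin

definition cov :: "nat \<Rightarrow> (nat \<Rightarrow> 'c set) \<Rightarrow> 'c set \<Rightarrow> nat" where
  "cov n A W = card {i \<in> {1..n}. A i \<inter> W \<noteq> {}}"

definition is_instance :: "'c set \<Rightarrow> nat \<Rightarrow> (nat \<Rightarrow> 'c set) \<Rightarrow> nat \<Rightarrow> bool" where
  "is_instance C n A k \<longleftrightarrow> finite C \<and> C \<noteq> {} \<and> n \<ge> 1 \<and> (\<forall>i\<in>{1..n}. A i \<subseteq> C)
     \<and> 1 \<le> k \<and> k \<le> card C"

definition committee :: "'c set \<Rightarrow> nat \<Rightarrow> 'c set \<Rightarrow> bool" where
  "committee C k W \<longleftrightarrow> W \<subseteq> C \<and> card W \<le> k"

definition opt_cov :: "'c set \<Rightarrow> nat \<Rightarrow> (nat \<Rightarrow> 'c set) \<Rightarrow> nat \<Rightarrow> nat" where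
  "opt_cov C n A k = Max {cov n A W' | W'. W' \<subseteq> C \<and> card W' = k}"

definition CC_completion :: "'c set \<Rightarrow> nat \<Rightarrow> (nat \<Rightarrow> 'c set) \<Rightarrow> nat \<Rightarrow> 'c set \<Rightarrow> 'c set \<Rightarrow> bool" where
  "CC_completion C n A k W W2 \<longleftrightarrow>
     (\<exists>T. T \<subseteq> C - W \<and> card T = k - card W \<and> W2 = W \<union> T \<and>
        (\<forall>T'. T' \<subseteq> C - W \<and> card T' = k - card W \<longrightarrow> cov n A (W \<union> T') \<le> cov n A (W \<union> T)))"

definition affordable :: "'c set \<Rightarrow> nat \<Rightarrow> (nat \<Rightarrow> 'c set) \<Rightarrow> nat \<Rightarrow> 'c set \<Rightarrow> bool" where
  "affordable C n A k W \<longleftrightarrow>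
     (\<exists>p :: nat \<Rightarrow> 'c \<Rightarrow> real.
        (\<forall>i\<in>{1..n}. \<forall>c\<in>C. p i c \<ge> 0) \<and>
        (\<forall>i\<in>{1..n}. \<forall>c\<in>C. c \<notin> A i \<longrightarrow> p i c = 0) \<and>
        (\<forall>i\<in>{1..n}. (\<Sum>c\<in>C. p i c) \<le> real k / real n) \<and>
        (\<forall>c\<in>W. (\<Sum>i\<in>{1..n}. p i c) = 1) \<and>
        (\<forall>c\<in>C - W. (\<Sum>i\<in>{1..n}. p i c) = 0))"

end

theory Submission
  imports Defs
begin

lemma remove_min:
  fixes f :: "'a \<Rightarrow> nat"
  assumes "finite T" "T \<noteq> {}"
  shows "\<exists>x\<in>T. card T * sum f (T - {x}) \<ge> (card T - 1) * sum f T"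
proof -
  have "Min (f ` T) \<in> f ` T" using assms by (intro Min_in) auto
  then obtain x where x0: "x \<in> T" "f x = Min (f ` T)" by auto
  have x: "x \<in> T" "\<forall>y\<in>T. f x \<le> f y" using x0 assms by auto
  have "card T * f x \<le> sum f T" using sum_bounded_below[of T "f x" f] x by auto
  moreover have s: "sum f T = f x + sum f (T - {x})" using assms x by (simp add: sum.remove)
  moreover obtain m where m: "card T = Suc m" using assms by (metis card_gt_0_iff gr0_implies_Suc)
  ultimately have "card T * sum f (T - {x}) \<ge> (card T - 1) * sum f T"
    by (simp add: algebra_simps)
  then show ?thesis using x by blast
qed

lemma select_sub:
  fixes f :: "'a \<Rightarrow> nat"
  assumes "finite S" "j \<le> card S"
  shows "\<exists>T\<subseteq>S. card T = j \<and> card S * sum f T \<ge> j * sum f S"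
  using assms(2)
proof (induction "card S - j" arbitrary: j)
  case 0
  then show ?case by (intro exI[of _ S]) auto
next
  case (Suc d)
  have "d = card S - (j+1)" "j + 1 \<le> card S" using Suc by auto
  then obtain T where T: "T \<subseteq> S" "card T = j + 1" "card S * sum f T \<ge> (j+1) * sum f S"
    using Suc.hyps(1)[of "j+1"] by blast
  have fT: "finite T" using T assms(1) finite_subset by blast
  have "T \<noteq> {}" using T by auto
  then obtain x where x: "x \<in> T" "card T * sum f (T - {x}) \<ge> (card T - 1) * sum f T"
    using remove_min[OF fT] by blast
  have c: "card (T - {x}) = j" using T x fT by simp
  have "j * ((j+1) * sum f S) \<le> j * (card S * sum f T)" using T by (intro mult_le_mono2) simp
  also have "\<dots> = card S * (j * sum f T)" by (simp add: algebra_simps)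
  also have "\<dots> \<le> card S * ((j+1) * sum f (T - {x}))" using x T by (intro mult_le_mono2) simp
  also have "\<dots> = (j+1) * (card S * sum f (T - {x}))" by (simp add: algebra_simps)
  finally have "(j+1) * (card S * sum f (T - {x})) \<ge> (j+1) * (j * sum f S)" by (simp add: algebra_simps)
  then have "card S * sum f (T - {x}) \<ge> j * sum f S" using mult_le_cancel1[of "j+1"] by simp
  then show ?case using c T by (intro exI[of _ "T - {x}"]) auto
qed


lemma cov_le: "cov n A X \<le> n"
  unfolding cov_def by (metis (no_types, lifting) card_atLeastAtMost card_mono diff_Suc_1 finite_atLeastAtMost mem_Collect_eq subsetI)

lemma afford_bound:
  assumes "W \<subseteq> C" "finite C" "n \<ge> 1" "affordable C n A k W"
  shows "real (card W) * real n \<le> real (cov n A W) * real k"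
proof -
  obtain p :: "nat \<Rightarrow> 'a \<Rightarrow> real" where
    p0: "\<forall>i\<in>{1..n}. \<forall>c\<in>C. p i c \<ge> 0" and
    pA: "\<forall>i\<in>{1..n}. \<forall>c\<in>C. c \<notin> A i \<longrightarrow> p i c = 0" and
    pb: "\<forall>i\<in>{1..n}. (\<Sum>c\<in>C. p i c) \<le> real k / real n" and
    pW: "\<forall>c\<in>W. (\<Sum>i\<in>{1..n}. p i c) = 1"
    using assms(4) unfolding affordable_def by blast
  define V where "V = {i \<in> {1..n}. A i \<inter> W \<noteq> {}}"
  have fW: "finite W" using assms finite_subset by blast
  have "real (card W) = (\<Sum>c\<in>W. (\<Sum>i\<in>{1..n}. p i c))" using pW by simp
  also have "\<dots> = (\<Sum>i\<in>{1..n}. \<Sum>c\<in>W. p i c)" by (rule sum.swap)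
  also have "\<dots> = (\<Sum>i\<in>V. \<Sum>c\<in>W. p i c)"
  proof (rule sum.mono_neutral_right)
    show "finite {1..n}" by simp
    show "V \<subseteq> {1..n}" unfolding V_def by auto
    show "\<forall>i\<in>{1..n} - V. (\<Sum>c\<in>W. p i c) = 0"
    proof
      fix i assume i: "i \<in> {1..n} - V"
      have "\<forall>c\<in>W. p i c = 0"
      proof
        fix c assume c: "c \<in> W"
        have "c \<notin> A i" using i c unfolding V_def by auto
        then show "p i c = 0" using pA i c assms(1) by blast
      qed
      then show "(\<Sum>c\<in>W. p i c) = 0" by simp
    qed
  qed
  also have "\<dots> \<le> (\<Sum>i\<in>V. real k / real n)"
  proof (rule sum_mono)
    fix i assume i: "i \<in> V"
    then have i1: "i \<in> {1..n}" unfolding V_def by auto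
    have "(\<Sum>c\<in>W. p i c) \<le> (\<Sum>c\<in>C. p i c)"
      using assms(1,2) p0 i1 by (intro sum_mono2) auto
    then show "(\<Sum>c\<in>W. p i c) \<le> real k / real n" using pb i1 by force
  qed
  also have "\<dots> = real (cov n A W) * (real k / real n)" unfolding V_def cov_def by simp
  finally have "real (card W) \<le> real (cov n A W) * (real k / real n)" .
  then have "real (card W) * real n \<le> real (cov n A W) * (real k / real n) * real n"
    by (intro mult_right_mono) auto
  also have "\<dots> = real (cov n A W) * real k" using assms(3) by simp
  finally show ?thesis .
qed

lemma arith_final:
  fixes k w x u g cc opt nn :: real
  assumes "k \<ge> 1" "0 \<le> w" "w \<le> k" "k * g \<ge> (k - w) * u" "x + u \<ge> opt" "opt \<le> nn"
    "w * nn \<le> x * k" "cc \<ge> x + g" "0 \<le> opt" "0 \<le> u" "0 \<le> x"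
  shows "4 * cc \<ge> 3 * opt"
proof (cases "x \<ge> opt")
  case True
  have "(k - w) * u \<ge> 0" using assms by simp
  then have "k * g \<ge> 0" using assms by linarith
  then have "g \<ge> 0" using assms by (simp add: zero_le_mult_iff)
  then show ?thesis using True assms by linarith
next
  case False
  have "k * cc \<ge> k * x + k * g" using assms by (simp add: distrib_left[symmetric] mult_left_mono)
  moreover have "(k - w) * u \<ge> (k - w) * (opt - x)" using assms by (intro mult_left_mono) auto
  ultimately have A1: "k * cc \<ge> w * x + (k - w) * opt" using assms by (simp add: algebra_simps)
  have "w * opt \<le> w * nn" using assms by (simp add: mult_left_mono)
  then have "w * opt \<le> k * x" using assms by (simp add: mult.commute)
  then have "w * (w * opt) \<le> w * (k * x)" using assms by (intro mult_left_mono) auto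
  then have A2: "w * (w * opt) \<le> k * (w * x)" by (simp add: algebra_simps)
  have "k * (k * cc) \<ge> k * (w * x + (k - w) * opt)" using A1 assms by (intro mult_left_mono) auto
  then have "k * (k * cc) \<ge> k * (w * x) + k * ((k - w) * opt)" by (simp add: distrib_left)
  then have "k * (k * cc) \<ge> w * w * opt + k * (k - w) * opt" using A2 by (simp add: algebra_simps)
  moreover have "4 * (w * w * opt + k * (k - w) * opt) \<ge> 3 * (k * k) * opt"
  proof -
    have "(2*w - k)^2 * opt \<ge> 0" using assms by simp
    then show ?thesis by (simp add: algebra_simps power2_eq_square)
  qed
  ultimately have "(k*k) * (4 * cc) \<ge> (k*k) * (3 * opt)" by (simp add: algebra_simps)
  moreover have kk: "k * k > 0" using assms by simp
  ultimately show ?thesis using mult_le_cancel_left_pos[OF kk] by blast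
qed


theorem corollary3:
  fixes C :: "'c set" and n k :: nat and A :: "nat \<Rightarrow> 'c set" and W W2 :: "'c set"
  assumes "is_instance C n A k"
    and "committee C k W"
    and "affordable C n A k W"
    and "CC_completion C n A k W W2"
  shows "4 * cov n A W2 \<ge> 3 * opt_cov C n A k"
proof -
  have fC: "finite C" and n1: "n \<ge> 1" and AC: "\<forall>i\<in>{1..n}. A i \<subseteq> C" and k1: "1 \<le> k"
    and kC: "k \<le> card C"
    using assms(1) unfolding is_instance_def by auto
  have WC: "W \<subseteq> C" and wk: "card W \<le> k" using assms(2) unfolding committee_def by auto
  have fW: "finite W" using WC fC finite_subset by blast
  define w where "w = card W"
  define x where "x = cov n A W"
  define M where "M = {cov n A W' | W'. W' \<subseteq> C \<and> card W' = k}"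
  have Mfin: "finite M"
  proof (rule finite_subset)
    show "M \<subseteq> {0..n}" unfolding M_def using cov_le by auto
  qed simp
  obtain W0 where W0: "W0 \<subseteq> C" "card W0 = k" using obtain_subset_with_card_n[OF kC] by blast
  have "M \<noteq> {}" unfolding M_def using W0 by blast
  then have "Max M \<in> M" using Mfin by (intro Max_in)
  then obtain OPT where OPT: "OPT \<subseteq> C" "card OPT = k" "opt_cov C n A k = cov n A OPT"
    unfolding M_def opt_cov_def by auto
  have fO: "finite OPT" using OPT fC finite_subset by blast
  define opt where "opt = cov n A OPT"
  define U where "U = {i \<in> {1..n}. A i \<inter> W = {} \<and> A i \<inter> OPT \<noteq> {}}"
  have fU: "finite U" unfolding U_def by simp
  define a where "a i = (SOME c. c \<in> A i \<inter> OPT)" for i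
  have aU: "a i \<in> A i \<inter> OPT" if "i \<in> U" for i
  proof -
    have "\<exists>c. c \<in> A i \<inter> OPT" using that unfolding U_def by auto
    then show ?thesis unfolding a_def by (rule someI_ex)
  qed
  have aW: "a i \<notin> W" if "i \<in> U" for i using aU[OF that] that unfolding U_def by auto
  define f where "f c = card {i \<in> U. a i = c}" for c
  have sumU: "sum f OPT = card U"
  proof -
    have "sum (\<lambda>y. sum (\<lambda>_. 1::nat) {i. i \<in> U \<and> a i = y}) OPT = sum (\<lambda>_. 1) U"
      using aU fU fO by (intro sum.group) auto
    then show ?thesis unfolding f_def by simp
  qed
  have "k - w \<le> card OPT" using OPT by simp
  then obtain S0 where S0: "S0 \<subseteq> OPT" "card S0 = k - w" "card OPT * sum f S0 \<ge> (k - w) * sum f OPT"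
    using select_sub[OF fO] by blast
  define S' where "S' = S0 - W"
  have fS0: "finite S0" using S0 fO finite_subset by blast
  have "sum f S0 = sum f S'"
  proof -
    have "\<forall>c\<in>S0 - S'. f c = 0" unfolding S'_def f_def using aW fU by auto
    then show ?thesis using fS0 unfolding S'_def by (intro sum.mono_neutral_right) auto
  qed
  define g where "g = sum f S'"
  have gbound: "k * g \<ge> (k - w) * card U" using S0 OPT sumU \<open>sum f S0 = sum f S'\<close> unfolding g_def by simp
  have S'C: "S' \<subseteq> C - W" unfolding S'_def using S0 OPT by auto
  have fS': "finite S'" using fS0 unfolding S'_def by simp
  have cS': "card S' \<le> k - w" unfolding S'_def using S0 fS0 by (metis Diff_subset card_mono)
  have "card (C - W) = card C - w" unfolding w_def using WC fC by (simp add: card_Diff_subset fW)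
  then have "card ((C - W) - S') = card C - w - card S'" using S'C fS' by (simp add: card_Diff_subset)
  then have "k - w - card S' \<le> card ((C - W) - S')" using kC by simp
  then obtain R where R: "R \<subseteq> (C - W) - S'" "card R = k - w - card S'" "finite R"
    using obtain_subset_with_card_n by blast
  define T where "T = S' \<union> R"
  have TC: "T \<subseteq> C - W" unfolding T_def using R S'C by auto
  have cT: "card T = k - card W" unfolding T_def w_def[symmetric]
    using R fS' cS' by (subst card_Un_disjoint) auto
  define V where "V = {i \<in> {1..n}. A i \<inter> W \<noteq> {}}"
  define Q where "Q = {i \<in> U. a i \<in> S'}"
  have cQ: "card Q = g"
  proof -
    have "sum (\<lambda>y. sum (\<lambda>_. 1::nat) {i. i \<in> Q \<and> a i = y}) S' = sum (\<lambda>_. 1) Q"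
      using fU fS' unfolding Q_def by (intro sum.group) auto
    moreover have "\<And>y. y \<in> S' \<Longrightarrow> {i. i \<in> Q \<and> a i = y} = {i \<in> U. a i = y}" unfolding Q_def by auto
    ultimately show ?thesis unfolding g_def f_def by simp
  qed
  have "V \<inter> Q = {}" unfolding V_def Q_def U_def by auto
  moreover have "V \<union> Q \<subseteq> {i \<in> {1..n}. A i \<inter> (W \<union> T) \<noteq> {}}"
    unfolding V_def Q_def T_def using aU U_def by auto
  ultimately have "card V + card Q \<le> cov n A (W \<union> T)"
  proof -
    have fV: "finite V" unfolding V_def by simp
    have fQ: "finite Q" unfolding Q_def using fU by simp
    have "card V + card Q = card (V \<union> Q)" using fV fQ \<open>V \<inter> Q = {}\<close> by (simp add: card_Un_disjoint)
    also have "\<dots> \<le> card {i \<in> {1..n}. A i \<inter> (W \<union> T) \<noteq> {}}"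
      using \<open>V \<union> Q \<subseteq> _\<close> by (intro card_mono) auto
    finally show ?thesis by (simp add: cov_def)
  qed
  then have covT: "x + g \<le> cov n A (W \<union> T)" using cQ unfolding x_def cov_def V_def by simp
  obtain T0 where T0: "W2 = W \<union> T0"
    "\<forall>T'. T' \<subseteq> C - W \<and> card T' = k - card W \<longrightarrow> cov n A (W \<union> T') \<le> cov n A (W \<union> T0)"
    using assms(4) unfolding CC_completion_def by blast
  have "cov n A (W \<union> T) \<le> cov n A (W \<union> T0)" using T0(2) TC cT by blast
  then have c2: "x + g \<le> cov n A W2" using T0(1) covT by simp
  have "{i \<in> {1..n}. A i \<inter> OPT \<noteq> {}} \<subseteq> V \<union> U" unfolding V_def U_def by auto
  then have "opt \<le> card (V \<union> U)" unfolding opt_def cov_def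
    using fU by (intro card_mono) (auto simp: V_def)
  also have "\<dots> \<le> card V + card U" by (rule card_Un_le)
  finally have ob: "opt \<le> x + card U" unfolding x_def cov_def V_def by simp
  have on: "opt \<le> n" unfolding opt_def by (rule cov_le)
  have af: "real w * real n \<le> real x * real k"
    unfolding w_def x_def using afford_bound[OF WC fC n1 assms(3)] .
  have "4 * real (cov n A W2) \<ge> 3 * real opt"
  proof (rule arith_final[where k="real k" and w="real w" and x="real x" and u="real (card U)" and g="real g" and cc="real (cov n A W2)" and opt="real opt" and nn="real n"])
    show "real k * real g \<ge> (real k - real w) * real (card U)"
    proof -
      have "real ((k - w) * card U) \<le> real (k * g)" using gbound by linarith
      then show ?thesis using wk unfolding w_def by (simp add: of_nat_diff)
    qed
  qed (use k1 wk w_def ob on af c2 in auto)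
  then show ?thesis using OPT opt_def by linarith
qed

end
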